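(* Let $N\ge2$ and let $x(t)=(x_1(t),\dots,x_N(t))$, $x_i(t)\in\mathbb{R}$, be a (Carathéodory) solution of $$\dot x_i(t)=\frac{\lambda_i(x)}{N}\sum_{j=1}^N M_{ij}(t)\,\phi_{ij}(x_i,x_j)\,(x_j(t)-x_i(t)),\qquad i=1,\dots,N,$$ where all $M_{ij}:[0,+\infty)\to[0,1]$ are Lebesgue measurable and $\lambda_i:\mathbb{R}^N\to\mathbb{R}^+$, $\phi_{ij}:\mathbb{R}\times\mathbb{R}\to\mathbb{R}^+$ are Lipschitz continuous and strictly positive. Assume that $x_+^*:=\max\{x_i(t):i=1,\dots,N\}$ is constant in $t$, and let $I^+(t)$ be the set of indices $i$ with $x_i(t)=x_+^*$. Then if $i\notin I^+(t)$, it holds $i\notin I^+(t+h)$ for all $h>0$. Similarly, if $x_-^*:=\min\{x_i(t):i=1,\dots,N\}$ is constant in $t$ and $I^-(t)$ is the set of indices with $x_i(t)=x_-^*$, then $i\notin I^-(t)$ implies $i\notin I^-(t+h)$ for all $h>0$. *)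

theory Defs
  imports "HOL-Analysis.Analysis"
begin

definition rhs ::
  "('n::finite \<Rightarrow> real ^ 'n \<Rightarrow> real) \<Rightarrow> ('n \<Rightarrow> 'n \<Rightarrow> real \<Rightarrow> real)
   \<Rightarrow> ('n \<Rightarrow> 'n \<Rightarrow> real \<Rightarrow> real \<Rightarrow> real) \<Rightarrow> real ^ 'n \<Rightarrow> real \<Rightarrow> 'n \<Rightarrow> real" where
  "rhs lam M phi v s i =
     lam i v / real CARD('n) *
       (\<Sum>j\<in>UNIV. M i j s * phi i j (v $ i) (v $ j) * (v $ j - v $ i))"

text \<open>Caratheodory solution on [0,+infinity): every component is the integral of the
  (Lebesgue integrable) right-hand side, i.e. it is absolutely continuous on every
  compact interval [0,t] and satisfies the ODE almost everywhere.\<close>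
definition carath_solution ::
  "('n::finite \<Rightarrow> real ^ 'n \<Rightarrow> real) \<Rightarrow> ('n \<Rightarrow> 'n \<Rightarrow> real \<Rightarrow> real)
   \<Rightarrow> ('n \<Rightarrow> 'n \<Rightarrow> real \<Rightarrow> real \<Rightarrow> real) \<Rightarrow> (real \<Rightarrow> real ^ 'n) \<Rightarrow> bool" where
  "carath_solution lam M phi x \<longleftrightarrow>
     (\<forall>i. \<forall>t\<ge>0.
        (\<lambda>s. rhs lam M phi (x s) s i) absolutely_integrable_on {0..t} \<and>
        x t $ i = x 0 $ i + integral {0..t} (\<lambda>s. rhs lam M phi (x s) s i))"

end

theory Submission
  imports Defs
begin

lemma core_zero:
  fixes y :: "real \<Rightarrow> real"
  assumes tT: "t \<le> T" and cont: "continuous_on {t..T} y"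
    and nn: "\<And>r. r \<in> {t..T} \<Longrightarrow> 0 \<le> y r" and K: "K > 0"
    and est: "\<And>r s m. t \<le> r \<Longrightarrow> r \<le> s \<Longrightarrow> s \<le> T \<Longrightarrow> (\<forall>u\<in>{r..s}. y u \<le> m)
               \<Longrightarrow> y r \<le> y s + K*(s-r)*m"
    and yT: "y T = 0"
  shows "y t = 0"
proof -
  define d where "d = 1/(2*K)"
  have d: "d > 0" "K * d = 1/2" using K by (auto simp: d_def)
  have step: "y (max t (s - d)) = 0" if s: "t \<le> s" "s \<le> T" "y s = 0" for s
  proof -
    define r0 where "r0 = max t (s - d)"
    have r0: "t \<le> r0" "r0 \<le> s" using s d by (auto simp: r0_def)
    have "continuous_on {r0..s} y" by (rule continuous_on_subset[OF cont]) (use r0 s in auto)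
    then obtain rs where rs: "rs \<in> {r0..s}" "\<forall>u\<in>{r0..s}. y u \<le> y rs"
      using continuous_attains_sup[of "{r0..s}" y] r0 by auto
    have ynn: "0 \<le> y rs" using nn rs r0 s by auto
    have "y rs \<le> y s + K*(s-rs)*y rs"
      using est[of rs s "y rs"] rs r0 s by auto
    also have "\<dots> \<le> K*d*y rs"
    proof -
      have "s - rs \<le> d" using rs by (auto simp: r0_def)
      then show ?thesis using s(3) ynn K by (simp add: mult_right_mono)
    qed
    finally have "y rs \<le> 0" using d by simp
    moreover have "y r0 \<le> y rs" using rs(2) r0 by auto
    ultimately have "y r0 \<le> 0" by simp
    moreover have "0 \<le> y r0" using nn r0 s by auto
    ultimately show ?thesis by (simp add: r0_def)
  qed
  have ind: "y (max t (T - real n * d)) = 0" for n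
  proof (induction n)
    case 0 then show ?case using tT yT by simp
  next
    case (Suc n)
    have "y (max t (max t (T - real n * d) - d)) = 0"
      using step[of "max t (T - real n * d)"] Suc tT d by auto
    moreover have "max t (max t (T - real n * d) - d) = max t (T - real (Suc n) * d)"
      using d by (auto simp: algebra_simps max_def)
    ultimately show ?case by simp
  qed
  obtain n where "(T - t)/d \<le> real n" using real_arch_simple by blast
  then have "T - real n * d \<le> t" using d by (simp add: field_simps)
  then show ?thesis using ind[of n] by (simp add: max_def)
qed

lemma mid_est:
  fixes y g :: "real \<Rightarrow> real"
  assumes gi: "g integrable_on {t..T}" and gle: "\<And>u. u \<in> {t..T} \<Longrightarrow> g u \<le> K * y u"
    and rep: "\<And>r s. t \<le> r \<Longrightarrow> r \<le> s \<Longrightarrow> s \<le> T \<Longrightarrow> y r - y s = integral {r..s} g"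
    and K: "K > 0"
    and h: "t \<le> r" "r \<le> s" "s \<le> T" "\<forall>u\<in>{r..s}. y u \<le> m"
  shows "y r \<le> y s + K*(s-r)*m"
proof -
  have gi': "g integrable_on {r..s}" by (rule integrable_on_subinterval[OF gi]) (use h in auto)
  have "integral {r..s} g \<le> integral {r..s} (\<lambda>_. K*m)"
  proof (rule integral_le[OF gi'])
    show "(\<lambda>_. K*m) integrable_on {r..s}" by (rule integrable_const_ivl)
    fix u assume u: "u \<in> {r..s}"
    have "g u \<le> K * y u" using gle u h by auto
    also have "\<dots> \<le> K * m" using h u K by auto
    finally show "g u \<le> K*m" .
  qed
  also have "\<dots> = K*(s-r)*m" using h by simp
  finally show ?thesis using rep[OF h(1-3)] by simp
qed

lemma sol_integrable:
  assumes sol: "carath_solution lam M phi x" and T: "0 \<le> T"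
  shows "(\<lambda>s. rhs lam M phi (x s) s i) integrable_on {0..T}"
  using sol T unfolding carath_solution_def absolutely_integrable_on_def by blast

lemma sol_rep:
  assumes sol: "carath_solution lam M phi x" and h: "0 \<le> r" "r \<le> s"
  shows "x s $ i - x r $ i = integral {r..s} (\<lambda>s. rhs lam M phi (x s) s i)"
proof -
  let ?f = "\<lambda>s. rhs lam M phi (x s) s i"
  have fi: "?f integrable_on {0..s}" using sol_integrable[OF sol, of s] h by simp
  have "integral {0..r} ?f + integral {r..s} ?f = integral {0..s} ?f"
    by (rule Henstock_Kurzweil_Integration.integral_combine[OF h fi])
  moreover have "x s $ i = x 0 $ i + integral {0..s} ?f" "x r $ i = x 0 $ i + integral {0..r} ?f"
    using sol h unfolding carath_solution_def by (meson order_trans)+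
  ultimately show ?thesis by simp
qed

lemma sol_cont_comp:
  assumes sol: "carath_solution lam M phi x" and T: "0 \<le> T"
  shows "continuous_on {0..T} (\<lambda>u. x u $ i)"
proof -
  let ?f = "\<lambda>s. rhs lam M phi (x s) s i"
  have "continuous_on {0..T} (\<lambda>u. x 0 $ i + integral {0..u} ?f)"
    by (rule continuous_on_add[OF continuous_on_const indefinite_integral_continuous_1[OF sol_integrable[OF sol T]]])
  moreover have "\<And>u. u \<in> {0..T} \<Longrightarrow> x 0 $ i + integral {0..u} ?f = x u $ i"
    using sol unfolding carath_solution_def atLeastAtMost_iff by metis
  ultimately show ?thesis using continuous_on_cong[of "{0..T}" "{0..T}" "\<lambda>u. x 0 $ i + integral {0..u} ?f" "\<lambda>u. x u $ i"] by blast
qed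

lemma sol_cont:
  assumes sol: "carath_solution lam M phi x" and T: "0 \<le> T"
  shows "continuous_on {0..T} x"
proof -
  have "continuous_on {0..T} (\<lambda>u. \<chi> k. x u $ k)"
    by (intro continuous_on_vec_lambda sol_cont_comp[OF sol T])
  then show ?thesis by (simp add: vec_lambda_eta)
qed

lemma finite_bound:
  fixes f :: "'a::finite \<Rightarrow> 'b \<Rightarrow> real"
  assumes "\<And>i. \<exists>B. \<forall>u\<in>S. f i u \<le> B"
  shows "\<exists>B>0. \<forall>i. \<forall>u\<in>S. f i u \<le> B"
proof -
  obtain Bf where Bf: "\<And>i. \<forall>u\<in>S. f i u \<le> Bf i" using assms by metis
  define B where "B = (\<Sum>i\<in>UNIV. \<bar>Bf i\<bar>) + 1"
  have "Bf i \<le> B - 1" for i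
  proof -
    have "\<bar>Bf i\<bar> \<le> (\<Sum>i\<in>UNIV. \<bar>Bf i\<bar>)" by (rule member_le_sum) auto
    then show ?thesis by (simp add: B_def)
  qed
  moreover have "B > 0" unfolding B_def by (simp add: add_nonneg_pos sum_nonneg)
  ultimately show ?thesis
  proof (intro exI[of _ B] conjI allI ballI)
    fix i u assume "u \<in> S"
    then have "f i u \<le> Bf i" using Bf by blast
    also have "\<dots> \<le> B" using \<open>\<And>i. Bf i \<le> B - 1\<close>[of i] by simp
    finally show "f i u \<le> B" .
  qed simp
qed

lemma cont_bound:
  fixes g :: "real \<Rightarrow> real"
  assumes "continuous_on {0..T} g"
  shows "\<exists>B. \<forall>u\<in>{0..T}. g u \<le> B"
proof (cases "T < 0")
  case True then show ?thesis by auto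
next
  case False
  then have ne: "{0..T} \<noteq> {}" by simp
  obtain z where "z \<in> {0..T}" "\<forall>u\<in>{0..T}. g u \<le> g z"
    using continuous_attains_sup[OF compact_Icc ne assms] by blast
  then show ?thesis by blast
qed

lemma rhs_upper:
  fixes v :: "real ^ 'n::finite"
  assumes Mr: "\<And>j. M i j s \<in> {0..1}" and lb: "lam i v \<le> Bl" and pb: "\<And>j. phi i j (v $ i) (v $ j) \<le> Bp"
    and lp: "lam i v > 0" and pp: "\<And>j. phi i j (v $ i) (v $ j) > 0"
    and le: "\<And>j. v $ j \<le> c"
  shows "rhs lam M phi v s i \<le> (Bl * Bp) * (c - v $ i)"
proof -
  have yn: "0 \<le> c - v $ i" using le[of i] by simp
  have trm: "M i j s * phi i j (v $ i) (v $ j) * (v $ j - v $ i) \<le> Bp * (c - v $ i)" for j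
  proof -
    have a0: "0 \<le> M i j s * phi i j (v $ i) (v $ j)" using Mr[of j] pp[of j] by auto
    have a1: "M i j s * phi i j (v $ i) (v $ j) \<le> Bp"
    proof -
      have "M i j s * phi i j (v $ i) (v $ j) \<le> 1 * phi i j (v $ i) (v $ j)"
        using Mr[of j] pp[of j] by (intro mult_right_mono) auto
      then show ?thesis using pb[of j] by simp
    qed
    have "M i j s * phi i j (v $ i) (v $ j) * (v $ j - v $ i) \<le> M i j s * phi i j (v $ i) (v $ j) * (c - v $ i)"
      using a0 le[of j] by (intro mult_left_mono) auto
    also have "\<dots> \<le> Bp * (c - v $ i)" using a1 yn by (intro mult_right_mono) auto
    finally show ?thesis .
  qed
  have S: "(\<Sum>j\<in>UNIV. M i j s * phi i j (v $ i) (v $ j) * (v $ j - v $ i)) \<le> real CARD('n) * (Bp * (c - v $ i))"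
    using sum_mono[of UNIV, OF trm] by simp
  have "rhs lam M phi v s i \<le> lam i v / real CARD('n) * (real CARD('n) * (Bp * (c - v $ i)))"
    unfolding rhs_def using lp by (intro mult_left_mono S) auto
  also have "\<dots> = lam i v * (Bp * (c - v $ i))" by simp
  also have "\<dots> \<le> Bl * (Bp * (c - v $ i))"
    using lb pb[of i] pp[of i] yn by (intro mult_right_mono) auto
  finally show ?thesis by simp
qed

lemma rhs_lower:
  fixes v :: "real ^ 'n::finite"
  assumes Mr: "\<And>j. M i j s \<in> {0..1}" and lb: "lam i v \<le> Bl" and pb: "\<And>j. phi i j (v $ i) (v $ j) \<le> Bp"
    and lp: "lam i v > 0" and pp: "\<And>j. phi i j (v $ i) (v $ j) > 0"
    and ge: "\<And>j. c \<le> v $ j"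
  shows "- rhs lam M phi v s i \<le> (Bl * Bp) * (v $ i - c)"
proof -
  have yn: "0 \<le> v $ i - c" using ge[of i] by simp
  have trm: "M i j s * phi i j (v $ i) (v $ j) * (v $ i - v $ j) \<le> Bp * (v $ i - c)" for j
  proof -
    have a0: "0 \<le> M i j s * phi i j (v $ i) (v $ j)" using Mr[of j] pp[of j] by auto
    have a1: "M i j s * phi i j (v $ i) (v $ j) \<le> Bp"
    proof -
      have "M i j s * phi i j (v $ i) (v $ j) \<le> 1 * phi i j (v $ i) (v $ j)"
        using Mr[of j] pp[of j] by (intro mult_right_mono) auto
      then show ?thesis using pb[of j] by simp
    qed
    have "M i j s * phi i j (v $ i) (v $ j) * (v $ i - v $ j) \<le> M i j s * phi i j (v $ i) (v $ j) * (v $ i - c)"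
      using a0 ge[of j] by (intro mult_left_mono) auto
    also have "\<dots> \<le> Bp * (v $ i - c)" using a1 yn by (intro mult_right_mono) auto
    finally show ?thesis .
  qed
  have S: "(\<Sum>j\<in>UNIV. M i j s * phi i j (v $ i) (v $ j) * (v $ i - v $ j)) \<le> real CARD('n) * (Bp * (v $ i - c))"
    using sum_mono[of UNIV, OF trm] by simp
  have neg: "- rhs lam M phi v s i = lam i v / real CARD('n) * (\<Sum>j\<in>UNIV. M i j s * phi i j (v $ i) (v $ j) * (v $ i - v $ j))"
  proof -
    have "(\<Sum>j\<in>UNIV. M i j s * phi i j (v $ i) (v $ j) * (v $ i - v $ j))
        = - (\<Sum>j\<in>UNIV. M i j s * phi i j (v $ i) (v $ j) * (v $ j - v $ i))"
      by (simp add: sum_negf[symmetric] algebra_simps)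
    then show ?thesis unfolding rhs_def by simp
  qed
  have "- rhs lam M phi v s i \<le> lam i v / real CARD('n) * (real CARD('n) * (Bp * (v $ i - c)))"
    unfolding neg using lp by (intro mult_left_mono S) auto
  also have "\<dots> = lam i v * (Bp * (v $ i - c))" by simp
  also have "\<dots> \<le> Bl * (Bp * (v $ i - c))"
    using lb pb[of i] pp[of i] yn by (intro mult_right_mono) auto
  finally show ?thesis by simp
qed

theorem lemma1:
  fixes x :: "real \<Rightarrow> real ^ 'n"
    and lam :: "'n \<Rightarrow> real ^ 'n \<Rightarrow> real"
    and M :: "'n \<Rightarrow> 'n \<Rightarrow> real \<Rightarrow> real"
    and phi :: "'n \<Rightarrow> 'n \<Rightarrow> real \<Rightarrow> real \<Rightarrow> real"
  assumes N2: "CARD('n) \<ge> 2"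
    and M_meas: "\<And>i j. M i j \<in> borel_measurable (restrict_space lebesgue {0..})"
    and M_range: "\<And>i j t. t \<ge> 0 \<Longrightarrow> M i j t \<in> {0..1}"
    and lam_lip: "\<And>i. \<exists>L. L-lipschitz_on UNIV (lam i)"
    and lam_pos: "\<And>i v. lam i v > 0"
    and phi_lip: "\<And>i j. \<exists>L. L-lipschitz_on UNIV (\<lambda>p::real \<times> real. phi i j (fst p) (snd p))"
    and phi_pos: "\<And>i j a b. phi i j a b > 0"
    and sol: "carath_solution lam M phi x"
  shows "(\<forall>c. (\<forall>t\<ge>0. Max (range (\<lambda>i. x t $ i)) = c) \<longrightarrow>
            (\<forall>t\<ge>0. \<forall>h>0. \<forall>i. x t $ i \<noteq> c \<longrightarrow> x (t + h) $ i \<noteq> c))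
       \<and> (\<forall>c. (\<forall>t\<ge>0. Min (range (\<lambda>i. x t $ i)) = c) \<longrightarrow>
            (\<forall>t\<ge>0. \<forall>h>0. \<forall>i. x t $ i \<noteq> c \<longrightarrow> x (t + h) $ i \<noteq> c))"
proof -
  let ?f = "\<lambda>i s. rhs lam M phi (x s) s i"
  have bounds: "\<exists>Bl Bp. Bl > 0 \<and> Bp > 0 \<and> (\<forall>u\<in>{0..T}. \<forall>i. lam i (x u) \<le> Bl) \<and>
      (\<forall>u\<in>{0..T}. \<forall>i j. phi i j (x u $ i) (x u $ j) \<le> Bp)" if T: "0 \<le> T" for T
  proof -
    have xc: "continuous_on {0..T} x" by (rule sol_cont[OF sol T])
    have "\<exists>B>0. \<forall>i. \<forall>u\<in>{0..T}. (\<lambda>i u. lam i (x u)) i u \<le> B"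
    proof (rule finite_bound)
      fix i
      obtain L where "L-lipschitz_on UNIV (lam i)" using lam_lip by blast
      then have "continuous_on UNIV (lam i)" by (rule lipschitz_on_continuous_on)
      then have "continuous_on {0..T} (\<lambda>u. lam i (x u))"
        by (rule continuous_on_compose2[OF _ xc subset_UNIV])
      then show "\<exists>B. \<forall>u\<in>{0..T}. lam i (x u) \<le> B" by (rule cont_bound)
    qed
    then obtain Bl where Bl: "Bl > 0" "\<forall>i. \<forall>u\<in>{0..T}. lam i (x u) \<le> Bl" by auto
    have "\<exists>B>0. \<forall>p. \<forall>u\<in>{0..T}. (\<lambda>p u. phi (fst p) (snd p) (x u $ fst p) (x u $ snd p)) p u \<le> B"
    proof (rule finite_bound)
      fix p :: "'n \<times> 'n"
      obtain L where "L-lipschitz_on UNIV (\<lambda>q::real \<times> real. phi (fst p) (snd p) (fst q) (snd q))"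
        using phi_lip by blast
      then have c1: "continuous_on UNIV (\<lambda>q::real \<times> real. phi (fst p) (snd p) (fst q) (snd q))"
        by (rule lipschitz_on_continuous_on)
      have c2: "continuous_on {0..T} (\<lambda>u. (x u $ fst p, x u $ snd p))"
        by (intro continuous_on_Pair sol_cont_comp[OF sol T])
      have "continuous_on {0..T} (\<lambda>u. phi (fst p) (snd p) (x u $ fst p) (x u $ snd p))"
        using continuous_on_compose2[OF c1 c2 subset_UNIV] by simp
      then show "\<exists>B. \<forall>u\<in>{0..T}. phi (fst p) (snd p) (x u $ fst p) (x u $ snd p) \<le> B"
        by (rule cont_bound)
    qed
    then obtain Bp where Bp: "Bp > 0" "\<forall>p. \<forall>u\<in>{0..T}. phi (fst p) (snd p) (x u $ fst p) (x u $ snd p) \<le> Bp"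
      by auto
    have "\<forall>u\<in>{0..T}. \<forall>i j. phi i j (x u $ i) (x u $ j) \<le> Bp"
    proof (intro ballI allI)
      fix u i j assume "u \<in> {0..T}"
      then have "phi (fst (i,j)) (snd (i,j)) (x u $ fst (i,j)) (x u $ snd (i,j)) \<le> Bp"
        using Bp(2) by blast
      then show "phi i j (x u $ i) (x u $ j) \<le> Bp" by simp
    qed
    then show ?thesis using Bl Bp by blast
  qed
  have rep: "x s $ i - x r $ i = integral {r..s} (?f i)" if "0 \<le> r" "r \<le> s" for i r s
    using sol_rep[OF sol that] .
  have fint: "?f i integrable_on {t..T}" if "0 \<le> t" "t \<le> T" for i t T
    by (rule integrable_on_subinterval[OF sol_integrable[OF sol, of T]]) (use that in auto)
  have xci: "continuous_on {t..T} (\<lambda>u. x u $ i)" if "0 \<le> t" "t \<le> T" for i t T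
    by (rule continuous_on_subset[OF sol_cont_comp[OF sol, of T]]) (use that in auto)
  have fin: "finite (range (\<lambda>i. x u $ i))" for u by simp
  show ?thesis
  proof (intro conjI allI impI)
    fix c t h :: real and i
    assume hc: "\<forall>t\<ge>0. Max (range (\<lambda>i. x t $ i)) = c" and t: "0 \<le> t" and h: "0 < h"
      and ne: "x t $ i \<noteq> c"
    show "x (t + h) $ i \<noteq> c"
    proof
      assume eq: "x (t + h) $ i = c"
      define T where "T = t + h"
      have tT: "t \<le> T" "0 \<le> T" using t h by (auto simp: T_def)
      obtain Bl Bp where B: "Bl > 0" "Bp > 0" "\<forall>u\<in>{0..T}. \<forall>i. lam i (x u) \<le> Bl"
        "\<forall>u\<in>{0..T}. \<forall>i j. phi i j (x u $ i) (x u $ j) \<le> Bp" using bounds[OF tT(2)] by blast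
      have le: "x u $ j \<le> c" if "0 \<le> u" for u j
        using Max_ge[OF fin[of u], of "x u $ j"] hc that by auto
      define y where "y = (\<lambda>u. c - x u $ i)"
      have K: "Bl * Bp > 0" using B by simp
      have "y t = 0"
      proof (rule core_zero[OF tT(1), of y "Bl * Bp"])
        show "continuous_on {t..T} y" unfolding y_def
          by (intro continuous_on_diff continuous_on_const xci t tT)
        show "\<And>r. r \<in> {t..T} \<Longrightarrow> 0 \<le> y r" unfolding y_def using le t by auto
        show "0 < Bl * Bp" by (rule K)
        show "y T = 0" using eq by (simp add: y_def T_def)
        fix r s m
        assume a: "t \<le> r" "r \<le> s" "s \<le> T" "\<forall>u\<in>{r..s}. y u \<le> m"
        show "y r \<le> y s + Bl * Bp * (s - r) * m"
        proof (rule mid_est[OF fint[OF t tT(1), of i] _ _ K a])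
          fix u assume u: "u \<in> {t..T}"
          show "?f i u \<le> Bl * Bp * y u" unfolding y_def
          proof (rule rhs_upper)
            show "\<And>j. M i j u \<in> {0..1}" using M_range u t by auto
            show "lam i (x u) \<le> Bl" using B(3) u t by auto
            show "\<And>j. phi i j (x u $ i) (x u $ j) \<le> Bp" using B(4) u t by auto
            show "lam i (x u) > 0" by (rule lam_pos)
            show "\<And>j. phi i j (x u $ i) (x u $ j) > 0" by (rule phi_pos)
            show "\<And>j. x u $ j \<le> c" using le u t by auto
          qed
        next
          fix r s assume "t \<le> r" "r \<le> s" "s \<le> T"
          then show "y r - y s = integral {r..s} (?f i)"
            using rep[of r s i] t by (simp add: y_def)
        qed
      qed
      then show False using ne by (simp add: y_def)
    qed
  next
    fix c t h :: real and i
    assume hc: "\<forall>t\<ge>0. Min (range (\<lambda>i. x t $ i)) = c" and t: "0 \<le> t" and h: "0 < h"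
      and ne: "x t $ i \<noteq> c"
    show "x (t + h) $ i \<noteq> c"
    proof
      assume eq: "x (t + h) $ i = c"
      define T where "T = t + h"
      have tT: "t \<le> T" "0 \<le> T" using t h by (auto simp: T_def)
      obtain Bl Bp where B: "Bl > 0" "Bp > 0" "\<forall>u\<in>{0..T}. \<forall>i. lam i (x u) \<le> Bl"
        "\<forall>u\<in>{0..T}. \<forall>i j. phi i j (x u $ i) (x u $ j) \<le> Bp" using bounds[OF tT(2)] by blast
      have ge: "c \<le> x u $ j" if "0 \<le> u" for u j
        using Min_le[OF fin[of u], of "x u $ j"] hc that by auto
      define y where "y = (\<lambda>u. x u $ i - c)"
      have K: "Bl * Bp > 0" using B by simp
      have "y t = 0"
      proof (rule core_zero[OF tT(1), of y "Bl * Bp"])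
        show "continuous_on {t..T} y" unfolding y_def
          by (intro continuous_on_diff continuous_on_const xci t tT)
        show "\<And>r. r \<in> {t..T} \<Longrightarrow> 0 \<le> y r" unfolding y_def using ge t by auto
        show "0 < Bl * Bp" by (rule K)
        show "y T = 0" using eq by (simp add: y_def T_def)
        fix r s m
        assume a: "t \<le> r" "r \<le> s" "s \<le> T" "\<forall>u\<in>{r..s}. y u \<le> m"
        show "y r \<le> y s + Bl * Bp * (s - r) * m"
        proof (rule mid_est[OF integrable_neg[OF fint[OF t tT(1), of i]] _ _ K a])
          fix u assume u: "u \<in> {t..T}"
          show "- ?f i u \<le> Bl * Bp * y u" unfolding y_def
          proof (rule rhs_lower)
            show "\<And>j. M i j u \<in> {0..1}" using M_range u t by auto
            show "lam i (x u) \<le> Bl" using B(3) u t by auto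
            show "\<And>j. phi i j (x u $ i) (x u $ j) \<le> Bp" using B(4) u t by auto
            show "lam i (x u) > 0" by (rule lam_pos)
            show "\<And>j. phi i j (x u $ i) (x u $ j) > 0" by (rule phi_pos)
            show "\<And>j. c \<le> x u $ j" using ge u t by auto
          qed
        next
          fix r s assume "t \<le> r" "r \<le> s" "s \<le> T"
          then show "y r - y s = integral {r..s} (\<lambda>u. - ?f i u)"
            using rep[of r s i] t by (simp add: y_def integral_neg)
        qed
      qed
      then show False using ne by (simp add: y_def)
    qed
  qed
qed

end
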